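(* For each integer $n \ge 2$ and real $\gamma$, let $\mathcal{L}_n(\gamma)$ be the infinite graph with vertex set $\mathbb{Z}^+ = \{1,2,3,\ldots\}$ in which the vertices $1,\ldots,n$ form a complete graph $K_n$, the vertices $n, n+1, n+2, \ldots$ form an infinite path (edges $\{k,k+1\}$ for all $k \ge n$), and vertex $1$ carries a self-loop of weight $\gamma$. Let $H$ be its adjacency operator on $\ell^2(\mathbb{Z}^+)$, i.e. the bounded self-adjoint operator with matrix entries (in the standard basis $\{e_j\}_{j\ge1}$) $\langle e_1, He_1\rangle=\gamma$, $\langle e_i, He_j\rangle = 1$ for distinct $i,j\in\{1,\ldots,n\}$, $\langle e_k, He_{k+1}\rangle=\langle e_{k+1}, He_k\rangle=1$ for $k\ge n$, and all other entries $0$. Let $z_1 = n^{-1/2}\sum_{j=1}^{n} e_j$. If $\gamma = n + \mathcal{O}(1)$, then for $t = \pi/(2\sqrt{n})$, \[ \left|\langle e_1, e^{-itH} z_1\rangle\right| = \Omega(1). \]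
   Context: Asymptotic notation refers to $n\to\infty$: $\gamma=\gamma_n$ with $\gamma_n - n$ bounded, and $\Omega(1)$ means bounded below by a positive constant for all sufficiently large $n$. The inner product is $\langle x,y\rangle=\sum_u \overline{x_u}y_u$. *)

theory Defs
  imports "HOL-Analysis.Analysis"
begin

text \<open>Matrix entries of the adjacency operator H of L_n(gamma) on l2(Z+), in the
standard basis e_1, e_2, ... (index 0 is not a vertex; all entries involving 0 vanish).\<close>
definition Hmat :: "nat \<Rightarrow> real \<Rightarrow> nat \<Rightarrow> nat \<Rightarrow> complex" where
  "Hmat n \<gamma> i j =
     (if i = 1 \<and> j = 1 then complex_of_real \<gamma>
      else if 1 \<le> i \<and> i \<le> n \<and> 1 \<le> j \<and> j \<le> n \<and> i \<noteq> j then 1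
      else if n \<le> i \<and> j = i + 1 then 1
      else if n \<le> j \<and> i = j + 1 then 1
      else 0)"

fun Hpow :: "nat \<Rightarrow> real \<Rightarrow> nat \<Rightarrow> nat \<Rightarrow> nat \<Rightarrow> complex" where
  "Hpow n \<gamma> 0 i j = (if i = j then 1 else 0)"
| "Hpow n \<gamma> (Suc k) i j = (\<Sum>\<^sub>\<infinity>l. Hmat n \<gamma> i l * Hpow n \<gamma> k l j)"

definition expH_entry :: "nat \<Rightarrow> real \<Rightarrow> real \<Rightarrow> nat \<Rightarrow> nat \<Rightarrow> complex" where
  "expH_entry n \<gamma> t i j = (\<Sum>k. ((- \<i> * complex_of_real t) ^ k / fact k) * Hpow n \<gamma> k i j)"

definition amplitude :: "nat \<Rightarrow> real \<Rightarrow> real \<Rightarrow> complex" where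
  "amplitude n \<gamma> t = (\<Sum>j\<in>{1..n}. complex_of_real (1 / sqrt (real n)) * expH_entry n \<gamma> t 1 j)"

end

theory Submission
  imports Defs
begin


lemma Hmat_zero: "n \<ge> 2 \<Longrightarrow> max n (i+1) < l \<Longrightarrow> Hmat n g i l = 0"
  by (auto simp: Hmat_def)

lemma Hmat_sym: "Hmat n g i l = Hmat n g l i"
  by (auto simp: Hmat_def)

lemma Hmat_cnj: "cnj (Hmat n g i l) = Hmat n g i l"
  by (auto simp: Hmat_def)

lemma Hpow_Suc': "n \<ge> 2 \<Longrightarrow> Hpow n g (Suc k) i j = (\<Sum>l\<le>max n (i+1). Hmat n g i l * Hpow n g k l j)"
proof -
  assume n: "n \<ge> 2"
  have "Hpow n g (Suc k) i j = infsum (\<lambda>l. Hmat n g i l * Hpow n g k l j) {..max n (i+1)}"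
    unfolding Hpow.simps
  proof (rule infsum_cong_neutral)
    fix x assume "x \<in> UNIV - {..max n (i+1)}"
    then have "max n (i+1) < x" by auto
    then show "Hmat n g i x * Hpow n g k x j = 0" using Hmat_zero[OF n] by simp
  qed auto
  then show ?thesis by simp
qed

lemma Hmat_abs_le: "n \<ge> 2 \<Longrightarrow> cmod (Hmat n g i l) \<le> (if l = 1 then \<bar>g\<bar> else 0) + (if l \<le> n then 1 else 0) + (if l = i+1 then 1 else 0) + (if l+1 = i then 1 else 0)"
  by (auto simp: Hmat_def)

lemma Hmat_row: "n \<ge> 2 \<Longrightarrow> (\<Sum>l\<le>L. cmod (Hmat n g i l)) \<le> \<bar>g\<bar> + real n + 3"
proof -
  assume n: "n \<ge> 2"
  have "(\<Sum>l\<le>L. cmod (Hmat n g i l)) \<le> (\<Sum>l\<le>L. (if l = 1 then \<bar>g\<bar> else 0) + (if l \<le> n then 1 else 0) + (if l = i+1 then 1 else 0) + (if l+1 = i then 1 else 0))"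
    by (rule sum_mono) (rule Hmat_abs_le[OF n])
  also have "\<dots> = (\<Sum>l\<le>L. (if l = 1 then \<bar>g\<bar> else 0)) + (\<Sum>l\<le>L. (if l \<le> n then 1 else 0)) + (\<Sum>l\<le>L. (if l = i+1 then 1 else 0)) + (\<Sum>l\<le>L. (if l+1 = i then 1 else 0))"
    by (simp add: sum.distrib)
  also have "\<dots> \<le> \<bar>g\<bar> + (real n + 1) + 1 + 1"
  proof -
    have a: "(\<Sum>l\<le>L. (if l = 1 then \<bar>g\<bar> else 0)) \<le> \<bar>g\<bar>"
      by (simp add: sum.delta)
    have "(\<Sum>l\<le>L. (if l \<le> n then 1 else 0::real)) \<le> (\<Sum>l\<le>n. 1)"
    proof -
      have e: "card (({..L} \<union> {..n}) \<inter> {l. l \<le> n}) \<le> card {..n}" by (rule card_mono) auto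
      show ?thesis
        by (rule order_trans[OF sum_mono2[of "{..L} \<union> {..n}"]]) (use e in \<open>auto simp: sum.If_cases\<close>)
    qed
    then have b: "(\<Sum>l\<le>L. (if l \<le> n then 1 else 0::real)) \<le> real n + 1" by simp
    have c: "(\<Sum>l\<le>L. (if l = i+1 then 1 else 0::real)) \<le> 1" by (simp add: sum.delta)
    have d: "(\<Sum>l\<le>L. (if l+1 = i then 1 else 0::real)) \<le> 1"
    proof (cases i)
      case 0 then show ?thesis by simp
    next
      case (Suc m) then show ?thesis by (simp add: sum.delta)
    qed
    have "(\<Sum>l\<le>L. (if l = 1 then \<bar>g\<bar> else 0)) + (\<Sum>l\<le>L. (if l \<le> n then 1 else 0)) + (\<Sum>l\<le>L. (if l = i+1 then 1 else 0)) + (\<Sum>l\<le>L. (if l+1 = i then 1 else 0)) \<le> \<bar>g\<bar> + (real n + 1) + 1 + 1"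
      by (rule add_mono[OF add_mono[OF add_mono[OF a b] c] d])
    then show ?thesis .
  qed
  finally show ?thesis by linarith
qed


lemma ps_summable:
  fixes Z :: "nat \<Rightarrow> complex" and z :: complex
  assumes "\<And>k. cmod (Z k) \<le> K * C ^ k" "C \<ge> 0"
  shows "summable (\<lambda>k. z^k / fact k * Z k)"
proof (rule summable_comparison_test)
  show "\<exists>N. \<forall>k\<ge>N. norm (z^k / fact k * Z k) \<le> K * (inverse (fact k) * (cmod z * C)^k)"
  proof (intro exI allI impI)
    fix k :: nat
    have "norm (z^k / fact k * Z k) = cmod z ^ k / fact k * cmod (Z k)"
      by (simp add: norm_mult norm_divide norm_power)
    also have "\<dots> \<le> cmod z ^ k / fact k * (K * C^k)"
      by (rule mult_left_mono[OF assms(1)]) simp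
    also have "\<dots> = K * (inverse (fact k) * (cmod z * C)^k)"
      by (simp add: power_mult_distrib field_simps)
    finally show "norm (z^k / fact k * Z k) \<le> K * (inverse (fact k) * (cmod z * C)^k)" .
  qed
  show "summable (\<lambda>k. K * (inverse (fact k) * (cmod z * C)^k))"
    by (intro summable_mult summable_exp)
qed

lemma ps_deriv:
  fixes Z :: "nat \<Rightarrow> complex"
  assumes "\<And>k. cmod (Z k) \<le> K * C ^ k" "C \<ge> 0"
  shows "((\<lambda>z. \<Sum>k. z^k / fact k * Z k) has_field_derivative (\<Sum>k. z^k / fact k * Z (Suc k))) (at z)"
proof -
  define c where "c k = Z k / fact k" for k
  have "((\<lambda>z. \<Sum>k. c k * z^k) has_field_derivative (\<Sum>k. diffs c k * z^k)) (at z)"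
  proof (rule termdiffs_strong_converges_everywhere)
    fix y :: complex
    show "summable (\<lambda>k. c k * y ^ k)"
      using ps_summable[OF assms, of y] by (simp add: c_def field_simps)
  qed
  moreover have "(\<lambda>z. \<Sum>k. c k * z^k) = (\<lambda>z. \<Sum>k. z^k / fact k * Z k)"
    by (simp add: c_def field_simps)
  moreover have "(\<Sum>k. diffs c k * z^k) = (\<Sum>k. z^k / fact k * Z (Suc k))"
  proof -
    have "diffs c k * z^k = z^k / fact k * Z (Suc k)" for k
      by (simp add: diffs_def c_def field_simps del: of_nat_Suc)
    then show ?thesis by simp
  qed
  ultimately show ?thesis by simp
qed

definition E :: "(nat \<Rightarrow> complex) \<Rightarrow> real \<Rightarrow> complex" where
  "E Z s = (\<Sum>k. (- \<i> * complex_of_real s)^k / fact k * Z k)"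

lemma E_deriv:
  fixes Z :: "nat \<Rightarrow> complex"
  assumes "\<And>k. cmod (Z k) \<le> K * C ^ k" "C \<ge> 0"
  shows "(E Z has_vector_derivative (- \<i> * E (\<lambda>k. Z (Suc k)) s)) (at s)"
proof -
  have f: "((\<lambda>s. - \<i> * complex_of_real s) has_vector_derivative (- \<i>)) (at s)"
    by (auto intro!: derivative_eq_intros simp: has_real_derivative_iff_has_vector_derivative[symmetric])
  have "(((\<lambda>z. \<Sum>k. z^k / fact k * Z k) \<circ> (\<lambda>s. - \<i> * complex_of_real s)) has_vector_derivative
          (- \<i> * (\<Sum>k. (- \<i> * complex_of_real s)^k / fact k * Z (Suc k)))) (at s)"
    by (rule field_vector_diff_chain_at[OF f ps_deriv[OF assms]])
  then show ?thesis unfolding E_def o_def .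
qed


definition uvec :: "nat \<Rightarrow> nat \<Rightarrow> complex" where
  "uvec n i = (if 1 \<le> i \<and> i \<le> n then 1 else 0)"

definition X :: "nat \<Rightarrow> real \<Rightarrow> nat \<Rightarrow> nat \<Rightarrow> complex" where
  "X n g k i = (\<Sum>j\<in>{1..n}. Hpow n g k i j)"

definition Ht :: "nat \<Rightarrow> real \<Rightarrow> nat \<Rightarrow> nat \<Rightarrow> nat \<Rightarrow> complex" where
  "Ht n g M i l = (if i \<le> M \<and> l \<le> M then Hmat n g i l else 0)"

fun Y :: "nat \<Rightarrow> real \<Rightarrow> nat \<Rightarrow> nat \<Rightarrow> nat \<Rightarrow> complex" where
  "Y n g M 0 i = uvec n i"
| "Y n g M (Suc k) i = (\<Sum>l\<le>M. Ht n g M i l * Y n g M k l)"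

lemma Hpow_bound:
  assumes n: "n \<ge> 2"
  shows "cmod (Hpow n g k i j) \<le> (\<bar>g\<bar> + real n + 3) ^ k"
proof (induction k arbitrary: i)
  case 0 then show ?case by simp
next
  case (Suc k)
  let ?C = "\<bar>g\<bar> + real n + 3"
  have "cmod (Hpow n g (Suc k) i j) \<le> (\<Sum>l\<le>max n (i+1). cmod (Hmat n g i l) * cmod (Hpow n g k l j))"
    unfolding Hpow_Suc'[OF n] by (rule order_trans[OF norm_sum]) (simp add: norm_mult)
  also have "\<dots> \<le> (\<Sum>l\<le>max n (i+1). cmod (Hmat n g i l) * ?C ^ k)"
    by (intro sum_mono mult_left_mono Suc.IH) simp
  also have "\<dots> = (\<Sum>l\<le>max n (i+1). cmod (Hmat n g i l)) * ?C ^ k"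
    by (simp add: sum_distrib_right)
  also have "\<dots> \<le> ?C * ?C ^ k"
    by (intro mult_right_mono Hmat_row[OF n]) simp
  finally show ?case by simp
qed

lemma X_0: "X n g 0 i = uvec n i"
  by (simp add: X_def uvec_def)

lemma X_Suc: assumes n: "n \<ge> 2" shows "X n g (Suc k) i = (\<Sum>l\<le>max n (i+1). Hmat n g i l * X n g k l)"
proof -
  have "X n g (Suc k) i = (\<Sum>j\<in>{1..n}. \<Sum>l\<le>max n (i+1). Hmat n g i l * Hpow n g k l j)"
    unfolding X_def Hpow_Suc'[OF n] ..
  also have "\<dots> = (\<Sum>l\<le>max n (i+1). \<Sum>j\<in>{1..n}. Hmat n g i l * Hpow n g k l j)"
    by (rule sum.swap)
  finally show ?thesis unfolding X_def by (simp add: sum_distrib_left)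
qed

lemma X_bound:
  assumes n: "n \<ge> 2"
  shows "cmod (X n g k i) \<le> real n * (\<bar>g\<bar> + real n + 3) ^ k"
proof -
  have "cmod (X n g k i) \<le> (\<Sum>j\<in>{1..n}. cmod (Hpow n g k i j))"
    unfolding X_def by (rule norm_sum)
  also have "\<dots> \<le> (\<Sum>j\<in>{1..n}. (\<bar>g\<bar> + real n + 3) ^ k)"
    by (intro sum_mono Hpow_bound[OF n])
  finally show ?thesis by simp
qed

lemma Ht_row: "n \<ge> 2 \<Longrightarrow> (\<Sum>l\<le>M. cmod (Ht n g M i l)) \<le> \<bar>g\<bar> + real n + 3"
  by (rule order_trans[OF sum_mono Hmat_row[where L=M and g=g and i=i]]) (auto simp: Ht_def)

lemma Y_bound:
  assumes n: "n \<ge> 2"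
  shows "cmod (Y n g M k i) \<le> (\<bar>g\<bar> + real n + 3) ^ k"
proof (induction k arbitrary: i)
  case 0 then show ?case by (simp add: uvec_def)
next
  case (Suc k)
  let ?C = "\<bar>g\<bar> + real n + 3"
  have "cmod (Y n g M (Suc k) i) \<le> (\<Sum>l\<le>M. cmod (Ht n g M i l) * cmod (Y n g M k l))"
    by (simp, rule order_trans[OF norm_sum]) (simp add: norm_mult)
  also have "\<dots> \<le> (\<Sum>l\<le>M. cmod (Ht n g M i l) * ?C ^ k)"
    by (intro sum_mono mult_left_mono Suc.IH) simp
  also have "\<dots> = (\<Sum>l\<le>M. cmod (Ht n g M i l)) * ?C ^ k"
    by (simp add: sum_distrib_right)
  also have "\<dots> \<le> ?C * ?C ^ k"
    by (intro mult_right_mono Ht_row[OF n]) simp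
  finally show ?case by simp
qed

lemma Y_eq:
  assumes n: "n \<ge> 2" and M: "n \<le> M"
  shows "max i n + k \<le> M \<Longrightarrow> Y n g M k i = X n g k i"
proof (induction k arbitrary: i)
  case 0 then show ?case by (simp add: X_0)
next
  case (Suc k)
  have iM: "i < M" using Suc.prems by simp
  have "Y n g M (Suc k) i = (\<Sum>l\<le>M. Hmat n g i l * Y n g M k l)"
    using iM by (simp add: Ht_def)
  also have "\<dots> = (\<Sum>l\<le>max n (i+1). Hmat n g i l * Y n g M k l)"
  proof (rule sum.mono_neutral_right)
    show "{..max n (i + 1)} \<subseteq> {..M}" using Suc.prems by auto
    show "\<forall>l\<in>{..M} - {..max n (i + 1)}. Hmat n g i l * Y n g M k l = 0"
    proof
      fix l assume "l \<in> {..M} - {..max n (i + 1)}"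
      then have "max n (i+1) < l" by auto
      then show "Hmat n g i l * Y n g M k l = 0" by (simp add: Hmat_zero[OF n])
    qed
  qed simp
  also have "\<dots> = (\<Sum>l\<le>max n (i+1). Hmat n g i l * X n g k l)"
    by (rule sum.cong[OF refl]) (use Suc.prems in \<open>auto intro!: Suc.IH\<close>)
  also have "\<dots> = X n g (Suc k) i" by (simp add: X_Suc[OF n])
  finally show ?case .
qed

lemma amp_eq:
  assumes n: "n \<ge> 2"
  shows "amplitude n g t = complex_of_real (1 / sqrt (real n)) * E (\<lambda>k. X n g k 1) t"
proof -
  have sm: "summable (\<lambda>k. ((- \<i> * complex_of_real t) ^ k / fact k) * Hpow n g k 1 j)" for j
    by (rule ps_summable[of _ 1 "\<bar>g\<bar> + real n + 3"]) (use Hpow_bound[OF n] in auto)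
  have "E (\<lambda>k. X n g k 1) t = (\<Sum>k. \<Sum>j\<in>{1..n}. ((- \<i> * complex_of_real t) ^ k / fact k) * Hpow n g k 1 j)"
    unfolding E_def X_def by (simp add: sum_distrib_left)
  also have "\<dots> = (\<Sum>j\<in>{1..n}. expH_entry n g t 1 j)"
    unfolding expH_entry_def by (rule suminf_sum) (rule sm)
  finally show ?thesis unfolding amplitude_def by (simp add: sum_distrib_left)
qed


lemma tail_bound:
  fixes D :: "nat \<Rightarrow> complex"
  assumes b: "summable b" and Db: "\<And>k. cmod (D k) \<le> b k" and D0: "\<And>k. k < P \<Longrightarrow> D k = 0"
  shows "cmod (suminf D) \<le> (\<Sum>i. b (i + P))"
proof -
  have sD: "summable D" by (rule summable_comparison_test'[OF b]) (use Db in auto)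
  have "suminf D = (\<Sum>i. D (i + P))"
    using suminf_minus_initial_segment[OF sD, of P] D0 by simp
  also have "cmod \<dots> \<le> (\<Sum>i. b (i + P))"
    by (rule norm_suminf_le) (use Db summable_ignore_initial_segment[OF b] in auto)
  finally show ?thesis .
qed

lemma trunc_approx:
  assumes n: "n \<ge> 2" and eps: "\<epsilon> > 0"
  shows "\<exists>M\<ge>n+1. cmod (E (\<lambda>k. X n g k 1) t - E (\<lambda>k. Y n g M k 1) t) \<le> \<epsilon>"
proof -
  let ?C = "\<bar>g\<bar> + real n + 3"
  let ?z = "- \<i> * complex_of_real t"
  define b where "b k = (real n + 1) * (inverse (fact k) * (\<bar>t\<bar> * ?C) ^ k)" for k
  have sb: "summable b" unfolding b_def by (intro summable_mult summable_exp)
  obtain N0 where N0: "\<And>P. P \<ge> N0 \<Longrightarrow> norm (\<Sum>i. b (i + P)) < \<epsilon>"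
    using suminf_exist_split[OF eps sb] by blast
  define P where "P = N0 + 2"
  define M where "M = n + P - 1"
  have M: "M \<ge> n + 1" unfolding M_def P_def by simp
  have C0: "?C \<ge> 0" by simp
  have sX: "summable (\<lambda>k. ?z^k / fact k * X n g k 1)"
    by (rule ps_summable[OF X_bound[OF n] C0])
  have sY: "summable (\<lambda>k. ?z^k / fact k * Y n g M k 1)"
    by (rule ps_summable[of _ 1, OF _ C0]) (use Y_bound[OF n] in auto)
  have "E (\<lambda>k. X n g k 1) t - E (\<lambda>k. Y n g M k 1) t = (\<Sum>k. ?z^k / fact k * X n g k 1 - ?z^k / fact k * Y n g M k 1)"
    unfolding E_def by (rule suminf_diff[OF sX sY])
  also have "cmod \<dots> \<le> (\<Sum>i. b (i + P))"
  proof (rule tail_bound[OF sb])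
    fix k
    have "cmod (?z^k / fact k * X n g k 1 - ?z^k / fact k * Y n g M k 1)
        = \<bar>t\<bar>^k / fact k * cmod (X n g k 1 - Y n g M k 1)"
    proof -
      have "?z^k / fact k * X n g k 1 - ?z^k / fact k * Y n g M k 1 = ?z^k / fact k * (X n g k 1 - Y n g M k 1)"
        by (simp add: right_diff_distrib)
      then show ?thesis by (simp only: norm_mult norm_divide norm_power) (simp add: norm_mult)
    qed
    also have "\<dots> \<le> \<bar>t\<bar>^k / fact k * ((real n + 1) * ?C^k)"
    proof (rule mult_left_mono)
      have "cmod (X n g k 1 - Y n g M k 1) \<le> cmod (X n g k 1) + cmod (Y n g M k 1)"
        by (rule norm_triangle_ineq4)
      also have "\<dots> \<le> real n * ?C^k + ?C^k"
        by (intro add_mono X_bound[OF n] Y_bound[OF n])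
      finally show "cmod (X n g k 1 - Y n g M k 1) \<le> (real n + 1) * ?C^k" by (simp add: algebra_simps)
    qed simp
    also have "\<dots> = b k" unfolding b_def power_mult_distrib by (simp add: divide_inverse)
    finally show "cmod (?z^k / fact k * X n g k 1 - ?z^k / fact k * Y n g M k 1) \<le> b k" .
  next
    fix k assume "k < P"
    then have "max 1 n + k \<le> M" using n unfolding M_def by simp
    then have "Y n g M k 1 = X n g k 1" by (intro Y_eq[OF n]) (use M in auto)
    then show "?z^k / fact k * X n g k 1 - ?z^k / fact k * Y n g M k 1 = 0" by simp
  qed
  also have "\<dots> \<le> \<epsilon>"
    using N0[of P] unfolding P_def by (simp add: abs_le_iff)
  finally show ?thesis using M by blast
qed


definition dl :: "nat \<Rightarrow> real \<Rightarrow> real" where "dl n g = (g - real n + 2) / 2"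
definition mm :: "nat \<Rightarrow> real \<Rightarrow> real" where "mm n g = (g + real n - 2) / 2"
definition om :: "nat \<Rightarrow> real \<Rightarrow> real" where "om n g = sqrt ((dl n g)^2 + real n - 1)"
definition pp :: "nat \<Rightarrow> real \<Rightarrow> real" where "pp n g = (dl n g + real n - 1) / om n g"
definition qq :: "nat \<Rightarrow> real \<Rightarrow> real" where "qq n g = (1 - dl n g) / om n g"

definition Acx :: "nat \<Rightarrow> real \<Rightarrow> complex \<Rightarrow> complex" where
  "Acx n g z = exp (- \<i> * of_real (mm n g) * z) * (cos (of_real (om n g) * z) - \<i> * of_real (pp n g) * sin (of_real (om n g) * z))"
definition Bcx :: "nat \<Rightarrow> real \<Rightarrow> complex \<Rightarrow> complex" where
  "Bcx n g z = exp (- \<i> * of_real (mm n g) * z) * (cos (of_real (om n g) * z) - \<i> * of_real (qq n g) * sin (of_real (om n g) * z))"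

context fixes n :: nat and g :: real assumes n: "n \<ge> 2"
begin

lemma om_pos: "om n g > 0"
proof -
  have "(dl n g)^2 + real n - 1 > 0" proof -
    have "real n \<ge> 2" using n by simp
    moreover have "(dl n g)^2 \<ge> 0" by simp
    ultimately show ?thesis by linarith
  qed
  then show ?thesis unfolding om_def by simp
qed

lemma om_sq: "(om n g)^2 = (dl n g)^2 + real n - 1"
proof -
  have "(dl n g)^2 + real n - 1 \<ge> 0" proof -
    have "real n \<ge> 2" using n by simp
    moreover have "(dl n g)^2 \<ge> 0" by simp
    ultimately show ?thesis by linarith
  qed
  then show ?thesis unfolding om_def by simp
qed

lemma R1: "pp n g * om n g = dl n g + real n - 1"
  using om_pos unfolding pp_def by simp
lemma R2: "qq n g * om n g = 1 - dl n g"
  using om_pos unfolding qq_def by simp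
lemma R3: "dl n g * pp n g + (real n - 1) * qq n g = om n g"
proof -
  have "(dl n g * pp n g + (real n - 1) * qq n g) * om n g = dl n g * (pp n g * om n g) + (real n - 1) * (qq n g * om n g)"
    by (simp add: algebra_simps)
  also have "\<dots> = om n g * om n g" unfolding R1 R2 using om_sq by (simp add: algebra_simps power2_eq_square)
  finally have "(dl n g * pp n g + (real n - 1) * qq n g) * om n g = om n g * om n g" .
  then show ?thesis using om_pos by simp
qed
lemma R4: "pp n g - dl n g * qq n g = om n g"
proof -
  have "(pp n g - dl n g * qq n g) * om n g = (pp n g * om n g) - dl n g * (qq n g * om n g)"
    by (simp add: algebra_simps)
  also have "\<dots> = om n g * om n g" unfolding R1 R2 using om_sq by (simp add: algebra_simps power2_eq_square)
  finally have "(pp n g - dl n g * qq n g) * om n g = om n g * om n g" .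
  then show ?thesis using om_pos by simp
qed

end


lemma algA:
  fixes e c s m d p q w N :: complex
  assumes "p*w = d + N - 1" "d*p + (N-1)*q = w"
  shows "e*(-\<i>*m)*(c - \<i>*p* s) + e*(-w* s - \<i>*p*w*c) = -\<i>*((m+d)*(e*(c - \<i>*p* s)) + (N-1)*(e*(c - \<i>*q* s)))"
proof -
  have ii: "\<i>*\<i> = (-1::complex)" by simp
  show ?thesis using assms ii by algebra
qed

lemma algB:
  fixes e c s m d p q w N :: complex
  assumes "q*w = 1 - d" "p - d*q = w" "m - d = N - 2"
  shows "e*(-\<i>*m)*(c - \<i>*q* s) + e*(-w* s - \<i>*q*w*c) = -\<i>*(e*(c - \<i>*p* s) + (N-2)*(e*(c - \<i>*q* s)))"
proof -
  have ii: "\<i>*\<i> = (-1::complex)" by simp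
  show ?thesis using assms ii by algebra
qed


lemma deriv_shape:
  fixes m w p :: complex
  shows "((\<lambda>z. exp(-\<i>*m*z) * (cos(w*z) - \<i>*p * sin(w*z))) has_field_derivative
     (exp(-\<i>*m*z)*(-\<i>*m)*(cos(w*z) - \<i>*p * sin(w*z)) + exp(-\<i>*m*z)*(-w * sin(w*z) - \<i>*p*w * cos(w*z)))) (at z)"
  apply (rule derivative_eq_intros refl)+
  apply algebra
  done

context fixes n :: nat and g :: real assumes n: "n \<ge> 2"
begin

lemma cR1: "complex_of_real (pp n g) * complex_of_real (om n g) = complex_of_real (dl n g) + of_nat n - 1"
proof -
  have "complex_of_real (pp n g * om n g) = complex_of_real (dl n g + real n - 1)" using R1[OF n] by simp
  then show ?thesis by simp
qed
lemma cR2: "complex_of_real (qq n g) * complex_of_real (om n g) = 1 - complex_of_real (dl n g)"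
proof -
  have "complex_of_real (qq n g * om n g) = complex_of_real (1 - dl n g)" using R2[OF n] by simp
  then show ?thesis by simp
qed
lemma cR3: "complex_of_real (dl n g) * complex_of_real (pp n g) + (of_nat n - 1) * complex_of_real (qq n g) = complex_of_real (om n g)"
proof -
  have "complex_of_real (dl n g * pp n g + (real n - 1) * qq n g) = complex_of_real (om n g)" using R3[OF n] by simp
  then show ?thesis by simp
qed
lemma cR4: "complex_of_real (pp n g) - complex_of_real (dl n g) * complex_of_real (qq n g) = complex_of_real (om n g)"
proof -
  have "complex_of_real (pp n g - dl n g * qq n g) = complex_of_real (om n g)" using R4[OF n] by simp
  then show ?thesis by simp
qed
lemma cg: "complex_of_real g = complex_of_real (mm n g) + complex_of_real (dl n g)"
proof -
  have "g = mm n g + dl n g" unfolding mm_def dl_def by (simp add: field_simps)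
  then have "complex_of_real g = complex_of_real (mm n g + dl n g)" by simp
  then show ?thesis by simp
qed
lemma cn: "complex_of_real (mm n g) - complex_of_real (dl n g) = of_nat n - 2"
proof -
  have "mm n g - dl n g = real n - 2" unfolding mm_def dl_def by (simp add: field_simps)
  then have "complex_of_real (mm n g - dl n g) = complex_of_real (real n - 2)" by simp
  then show ?thesis by simp
qed

lemma Acx_deriv: "(Acx n g has_field_derivative (-\<i>*(of_real g * Acx n g z + (of_nat n - 1) * Bcx n g z))) (at z)"
proof -
  have e: "Acx n g = (\<lambda>z. exp(-\<i>* of_real (mm n g)*z) * (cos(of_real (om n g)*z) - \<i>* of_real (pp n g) * sin(of_real (om n g)*z)))"
    by (rule ext) (simp add: Acx_def)
  show ?thesis unfolding e
    by (rule DERIV_cong[OF deriv_shape]) (unfold cg Bcx_def, rule algA[OF cR1 cR3])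
qed

lemma Bcx_deriv: "(Bcx n g has_field_derivative (-\<i>*(Acx n g z + (of_nat n - 2) * Bcx n g z))) (at z)"
proof -
  have e: "Bcx n g = (\<lambda>z. exp(-\<i>* of_real (mm n g)*z) * (cos(of_real (om n g)*z) - \<i>* of_real (qq n g) * sin(of_real (om n g)*z)))"
    by (rule ext) (simp add: Bcx_def)
  show ?thesis unfolding e
    by (rule DERIV_cong[OF deriv_shape]) (unfold Acx_def, rule algB[OF cR2 cR4 cn])
qed

lemma Acx_0: "Acx n g 0 = 1" by (simp add: Acx_def)
lemma Bcx_0: "Bcx n g 0 = 1" by (simp add: Bcx_def)

end


definition Fv :: "nat \<Rightarrow> real \<Rightarrow> nat \<Rightarrow> real \<Rightarrow> nat \<Rightarrow> complex" where
  "Fv n g M s i = E (\<lambda>k. Y n g M k i) s"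
definition Gv :: "nat \<Rightarrow> real \<Rightarrow> real \<Rightarrow> nat \<Rightarrow> complex" where
  "Gv n g s i = (if i = 1 then Acx n g (of_real s) else if 2 \<le> i \<and> i \<le> n then Bcx n g (of_real s) else 0)"

context fixes n :: nat and g :: real and M :: nat assumes n: "n \<ge> 2" and M: "n + 1 \<le> M"
begin

lemma F_deriv: "((\<lambda>s. Fv n g M s i) has_vector_derivative (-\<i> * (\<Sum>l\<le>M. Ht n g M i l * Fv n g M s l))) (at s)"
proof -
  let ?C = "\<bar>g\<bar> + real n + 3"
  let ?z = "- \<i> * complex_of_real s"
  have C0: "?C \<ge> 0" by simp
  have d: "((\<lambda>s. Fv n g M s i) has_vector_derivative (- \<i> * E (\<lambda>k. Y n g M (Suc k) i) s)) (at s)"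
    unfolding Fv_def by (rule E_deriv[of _ 1 ?C, OF _ C0]) (use Y_bound[OF n] in simp)
  have sm: "summable (\<lambda>k. ?z^k / fact k * Y n g M k l)" for l
    by (rule ps_summable[of _ 1, OF _ C0]) (use Y_bound[OF n] in simp)
  have "E (\<lambda>k. Y n g M (Suc k) i) s = (\<Sum>k. \<Sum>l\<le>M. Ht n g M i l * (?z^k / fact k * Y n g M k l))"
    unfolding E_def by (simp add: sum_distrib_left algebra_simps)
  also have "\<dots> = (\<Sum>l\<le>M. \<Sum>k. Ht n g M i l * (?z^k / fact k * Y n g M k l))"
    by (rule suminf_sum) (intro summable_mult sm)
  also have "\<dots> = (\<Sum>l\<le>M. Ht n g M i l * Fv n g M s l)"
    unfolding Fv_def E_def by (rule sum.cong[OF refl]) (rule suminf_mult[OF sm])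
  finally show ?thesis using d by simp
qed

lemma A_vderiv: "((\<lambda>s. Acx n g (of_real s)) has_vector_derivative (-\<i>*(of_real g * Acx n g (of_real s) + (of_nat n - 1) * Bcx n g (of_real s)))) (at s)"
proof -
  have f: "((\<lambda>s. complex_of_real s) has_vector_derivative 1) (at s)"
    by (auto intro!: derivative_eq_intros simp: has_real_derivative_iff_has_vector_derivative[symmetric])
  show ?thesis using field_vector_diff_chain_at[OF f Acx_deriv[OF n]] by (simp add: o_def)
qed

lemma B_vderiv: "((\<lambda>s. Bcx n g (of_real s)) has_vector_derivative (-\<i>*(Acx n g (of_real s) + (of_nat n - 2) * Bcx n g (of_real s)))) (at s)"
proof -
  have f: "((\<lambda>s. complex_of_real s) has_vector_derivative 1) (at s)"
    by (auto intro!: derivative_eq_intros simp: has_real_derivative_iff_has_vector_derivative[symmetric])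
  show ?thesis using field_vector_diff_chain_at[OF f Bcx_deriv[OF n]] by (simp add: o_def)
qed

lemma Hmat_1: "l \<le> n \<Longrightarrow> Hmat n g 1 l = (if l = 1 then complex_of_real g else if 2 \<le> l then 1 else 0)"
  using n unfolding Hmat_def by simp
lemma Hmat_mid: assumes i: "2 \<le> i" "i \<le> n" and l: "l \<le> n" shows "Hmat n g i l = (if 1 \<le> l \<and> l \<noteq> i then 1 else 0)"
proof -
  have a: "\<not>(i = 1 \<and> l = 1)" "\<not>(n \<le> i \<and> l = i+1)" "\<not>(n \<le> l \<and> i = l+1)" using i l by auto
  have b: "(1 \<le> i \<and> i \<le> n \<and> 1 \<le> l \<and> l \<le> n \<and> i \<noteq> l) = (1 \<le> l \<and> l \<noteq> i)" using i l by auto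
  show ?thesis unfolding Hmat_def using a b by (simp only: if_False b)
qed

lemma Hmat_np1: "l \<le> n \<Longrightarrow> Hmat n g (n+1) l = (if l = n then 1 else 0)"
  using n unfolding Hmat_def by simp
lemma Hmat_far: "i = 0 \<or> n + 2 \<le> i \<Longrightarrow> l \<le> n \<Longrightarrow> Hmat n g i l = 0"
proof -
  assume h: "i = 0 \<or> n + 2 \<le> i" and l: "l \<le> n"
  show ?thesis
  proof (cases "i = 0")
    case True then show ?thesis using n l unfolding Hmat_def by simp
  next
    case False then have "n + 2 \<le> i" using h by simp
    then show ?thesis using l unfolding Hmat_def by simp
  qed
qed

lemma HG_red: "(\<Sum>l\<le>M. Ht n g M i l * Gv n g s l) = (if i \<le> M then (\<Sum>l\<in>{1..n}. Hmat n g i l * Gv n g s l) else 0)"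
proof (cases "i \<le> M")
  case True
  have "(\<Sum>l\<le>M. Ht n g M i l * Gv n g s l) = (\<Sum>l\<in>{1..n}. Ht n g M i l * Gv n g s l)"
  proof (rule sum.mono_neutral_right)
    show "{1..n} \<subseteq> {..M}" using M by auto
    show "\<forall>l\<in>{..M} - {1..n}. Ht n g M i l * Gv n g s l = 0"
    proof
      fix l assume "l \<in> {..M} - {1..n}"
      then have "l = 0 \<or> n < l" by auto
      then have "Gv n g s l = 0" using n by (auto simp: Gv_def)
      then show "Ht n g M i l * Gv n g s l = 0" by simp
    qed
  qed simp
  also have "\<dots> = (\<Sum>l\<in>{1..n}. Hmat n g i l * Gv n g s l)"
    by (rule sum.cong[OF refl]) (use M True in \<open>auto simp: Ht_def\<close>)
  finally show ?thesis using True by simp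
qed (simp add: Ht_def)

lemma G_deriv: "((\<lambda>s. Gv n g s i) has_vector_derivative
   (-\<i> * (\<Sum>l\<le>M. Ht n g M i l * Gv n g s l) + (if i = n+1 then \<i> * Bcx n g (of_real s) else 0))) (at s)"
proof -
  let ?A = "Acx n g (of_real s)" and ?B = "Bcx n g (of_real s)"
  have split1: "(\<Sum>l\<in>{1..n}. f l) = f 1 + (\<Sum>l\<in>{2..n}. f l)" for f :: "nat \<Rightarrow> complex"
  proof -
    have "{1..n} = insert 1 {2..n}" using n by auto
    then show ?thesis by simp
  qed
  consider "i = 1" | "2 \<le> i \<and> i \<le> n" | "i = n + 1" | "i = 0 \<or> n + 2 \<le> i" by linarith
  then show ?thesis
  proof cases
    case 1
    have "(\<Sum>l\<in>{1..n}. Hmat n g i l * Gv n g s l) = of_real g * ?A + (\<Sum>l\<in>{2..n}. ?B)"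
    proof -
      have "(\<Sum>l\<in>{2..n}. Hmat n g i l * Gv n g s l) = (\<Sum>l\<in>{2..n}. ?B)"
      proof (rule sum.cong[OF refl])
        fix l assume l: "l \<in> {2..n}"
        then have "Hmat n g 1 l = 1" using Hmat_1[of l] by simp
        then show "Hmat n g i l * Gv n g s l = ?B" using l 1 by (simp add: Gv_def)
      qed
      moreover have "Hmat n g i 1 * Gv n g s 1 = of_real g * ?A" using 1 n Hmat_1[of 1] by (simp add: Gv_def)
      ultimately show ?thesis unfolding split1 by simp
    qed
    also have "\<dots> = of_real g * ?A + (of_nat n - 1) * ?B"
      using n by (simp add: of_nat_diff)
    finally have "(\<Sum>l\<le>M. Ht n g M i l * Gv n g s l) = of_real g * ?A + (of_nat n - 1) * ?B"
      using M 1 by (simp add: HG_red)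
    moreover have "(\<lambda>s. Gv n g s i) = (\<lambda>s. Acx n g (of_real s))" using 1 by (auto simp: Gv_def)
    ultimately show ?thesis using A_vderiv 1 n by simp
  next
    case 2
    have "(\<Sum>l\<in>{1..n}. Hmat n g i l * Gv n g s l) = ?A + (\<Sum>l\<in>{2..n}. ?B - (if l = i then ?B else 0))"
    proof -
      have "(\<Sum>l\<in>{2..n}. Hmat n g i l * Gv n g s l) = (\<Sum>l\<in>{2..n}. ?B - (if l = i then ?B else 0))"
        by (rule sum.cong[OF refl]) (use 2 in \<open>simp add: Hmat_mid Gv_def\<close>)
      moreover have "Hmat n g i 1 * Gv n g s 1 = ?A" using 2 n by (simp add: Hmat_mid Gv_def)
      ultimately show ?thesis unfolding split1 by simp
    qed
    also have "\<dots> = ?A + (of_nat n - 2) * ?B"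
    proof -
      have "(\<Sum>l\<in>{2..n}. ?B - (if l = i then ?B else 0)) = (of_nat n - 1) * ?B - ?B"
        using n 2 by (simp add: sum_subtractf of_nat_diff)
      then show ?thesis by (simp add: algebra_simps)
    qed
    finally have "(\<Sum>l\<le>M. Ht n g M i l * Gv n g s l) = ?A + (of_nat n - 2) * ?B"
      using M 2 by (simp add: HG_red)
    moreover have "(\<lambda>s. Gv n g s i) = (\<lambda>s. Bcx n g (of_real s))" using 2 by (auto simp: Gv_def)
    ultimately show ?thesis using B_vderiv 2 by simp
  next
    case 3
    have "(\<Sum>l\<in>{1..n}. Hmat n g i l * Gv n g s l) = (\<Sum>l\<in>{1..n}. (if l = n then ?B else 0))"
    proof (rule sum.cong[OF refl])
      fix l assume l: "l \<in> {1..n}"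
      then have "Hmat n g (n+1) l = (if l = n then 1 else 0)" using Hmat_np1[of l] by simp
      then show "Hmat n g i l * Gv n g s l = (if l = n then ?B else 0)" using l 3 n by (auto simp: Gv_def)
    qed
    also have "\<dots> = ?B" using n by simp
    finally have "(\<Sum>l\<le>M. Ht n g M i l * Gv n g s l) = ?B"
      using M 3 by (simp add: HG_red)
    moreover have "(\<lambda>s. Gv n g s i) = (\<lambda>s. 0)" using 3 n by (auto simp: Gv_def)
    ultimately show ?thesis using 3 by simp
  next
    case 4
    have "(\<Sum>l\<in>{1..n}. Hmat n g i l * Gv n g s l) = 0"
      by (rule sum.neutral) (use 4 in \<open>simp add: Hmat_far\<close>)
    then have "(\<Sum>l\<le>M. Ht n g M i l * Gv n g s l) = 0"
      by (simp add: HG_red)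
    moreover have "(\<lambda>s. Gv n g s i) = (\<lambda>s. 0)" using 4 n by (auto simp: Gv_def)
    moreover have "i \<noteq> n + 1" using 4 by auto
    ultimately show ?thesis by simp
  qed
qed

end


lemma energy_alg:
  fixes V W :: "nat \<Rightarrow> complex" and H :: "nat \<Rightarrow> nat \<Rightarrow> complex"
  assumes sym: "\<And>i l. H i l = H l i" and re: "\<And>i l. cnj (H i l) = H i l"
    and W: "\<And>i. W i = -\<i> * (\<Sum>l\<le>M. H i l * V l) - (if i = K then r else 0)"
    and K: "K \<le> M"
  shows "Re (\<Sum>i\<le>M. V i * cnj (W i) + W i * cnj (V i)) = -2 * Re (cnj (V K) * r)"
proof -
  define S where "S = (\<Sum>i\<le>M. \<Sum>l\<le>M. H i l * V l * cnj (V i))"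
  have cS: "cnj S = S"
  proof -
    have "cnj S = (\<Sum>i\<le>M. \<Sum>l\<le>M. H i l * cnj (V l) * V i)"
      unfolding S_def by (simp add: re)
    also have "\<dots> = (\<Sum>l\<le>M. \<Sum>i\<le>M. H i l * cnj (V l) * V i)"
      by (rule sum.swap)
    also have "\<dots> = S"
      unfolding S_def by (rule sum.cong[OF refl], rule sum.cong[OF refl]) (simp add: sym mult.commute mult.left_commute)
    finally show ?thesis .
  qed
  then have ImS: "Im S = 0" by (metis cnj.sel(2) complex_cnj_cancel_iff complex_eq_iff neg_equal_zero)
  define T where "T = (\<Sum>i\<le>M. W i * cnj (V i))"
  have T: "T = -\<i> * S - r * cnj (V K)"
  proof -
    have "T = (\<Sum>i\<le>M. -\<i> * (\<Sum>l\<le>M. H i l * V l * cnj (V i)) - (if i = K then r * cnj (V i) else 0))"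
      unfolding T_def W by (rule sum.cong[OF refl]) (simp add: algebra_simps sum_distrib_left sum_distrib_right)
    also have "\<dots> = -\<i> * S - r * cnj (V K)"
      unfolding S_def using K by (simp add: sum_subtractf sum_distrib_left)
    finally show ?thesis .
  qed
  have "(\<Sum>i\<le>M. V i * cnj (W i) + W i * cnj (V i)) = cnj T + T"
    unfolding T_def by (simp add: sum.distrib mult.commute)
  then have "Re (\<Sum>i\<le>M. V i * cnj (W i) + W i * cnj (V i)) = 2 * Re T" by simp
  also have "\<dots> = -2 * Re (cnj (V K) * r)"
    unfolding T using ImS by (simp add: mult.commute)
  finally show ?thesis .
qed

lemma E_zero: "E Z 0 = Z 0"
proof -
  have "(\<lambda>k. (- \<i> * complex_of_real 0)^k / fact k * Z k) = (\<lambda>k. if k = 0 then Z 0 else 0)"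
    by (rule ext) simp
  moreover have "(\<lambda>k. if k = 0 then Z 0 else 0) sums Z 0" using sums_single[of 0 "\<lambda>_. Z 0"] by simp
  ultimately show ?thesis unfolding E_def by (simp add: sums_iff)
qed

lemma rot_norm2: "cmod (exp (- \<i> * complex_of_real m * complex_of_real s) * (complex_of_real x - \<i> * complex_of_real y))^2 = x^2 + y^2"
proof -
  have "exp (- \<i> * complex_of_real m * complex_of_real s) = exp (\<i> * complex_of_real (- (m * s)))" by (simp add: mult.assoc)
  then have "cmod (exp (- \<i> * complex_of_real m * complex_of_real s)) = 1" by (simp only: norm_exp_i_times)
  moreover have "cmod (complex_of_real x - \<i> * complex_of_real y)^2 = x^2 + y^2"
    by (simp add: cmod_power2)
  ultimately show ?thesis by (simp add: norm_mult power_mult_distrib)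
qed

lemma Bcx_real: "Bcx n g (of_real s) = exp (- \<i> * complex_of_real (mm n g) * complex_of_real s) * (complex_of_real (cos (om n g * s)) - \<i> * complex_of_real (qq n g * sin (om n g * s)))"
  by (simp add: Bcx_def cos_of_real sin_of_real flip: of_real_mult)
lemma Acx_real: "Acx n g (of_real s) = exp (- \<i> * complex_of_real (mm n g) * complex_of_real s) * (complex_of_real (cos (om n g * s)) - \<i> * complex_of_real (pp n g * sin (om n g * s)))"
  by (simp add: Acx_def cos_of_real sin_of_real flip: of_real_mult)

lemma qq_sq: "n \<ge> 2 \<Longrightarrow> (qq n g)^2 \<le> 2"
proof -
  assume n: "n \<ge> 2"
  have w: "(om n g)^2 = (dl n g)^2 + real n - 1" by (rule om_sq[OF n])
  have wp: "om n g > 0" by (rule om_pos[OF n])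
  have "(qq n g)^2 * (om n g)^2 = (1 - dl n g)^2" using R2[OF n] by (metis power_mult_distrib)
  also have "\<dots> \<le> 2 * (om n g)^2"
  proof -
    have "2 * ((dl n g)^2 + 1) - (1 - dl n g)^2 = (dl n g + 1)^2" by (simp add: power2_eq_square algebra_simps)
    moreover have "(dl n g + 1)^2 \<ge> 0" by simp
    ultimately have "(1 - dl n g)^2 \<le> 2 * ((dl n g)^2 + 1)" by linarith
    moreover have "2 * ((dl n g)^2 + 1) \<le> 2 * ((dl n g)^2 + real n - 1)" using n by simp
    ultimately show ?thesis unfolding w by linarith
  qed
  finally show ?thesis using wp by simp
qed

lemma B_bound: "n \<ge> 2 \<Longrightarrow> cmod (Bcx n g (of_real s))^2 \<le> 3"
proof -
  assume n: "n \<ge> 2"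
  have "cmod (Bcx n g (of_real s))^2 = (cos (om n g * s))^2 + (qq n g * sin (om n g * s))^2"
    unfolding Bcx_real by (rule rot_norm2)
  also have "\<dots> \<le> 1 + 2 * 1"
  proof -
    have "(cos (om n g * s))^2 \<le> 1" by (simp add: abs_square_le_1) 
    moreover have "(qq n g * sin (om n g * s))^2 \<le> 2 * 1"
      unfolding power_mult_distrib by (rule mult_mono[OF qq_sq[OF n]]) (auto simp: abs_square_le_1)
    ultimately show ?thesis by linarith
  qed
  finally show ?thesis by simp
qed


definition Dv :: "nat \<Rightarrow> real \<Rightarrow> nat \<Rightarrow> real \<Rightarrow> nat \<Rightarrow> complex" where
  "Dv n g M s i = Fv n g M s i - Gv n g s i"
definition Nr :: "nat \<Rightarrow> real \<Rightarrow> nat \<Rightarrow> real \<Rightarrow> real" where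
  "Nr n g M s = (\<Sum>i\<le>M. (cmod (Dv n g M s i))^2)"

context fixes n :: nat and g :: real and M :: nat assumes n: "n \<ge> 2" and M: "n + 1 \<le> M"
begin

definition "D' s i = -\<i> * (\<Sum>l\<le>M. Ht n g M i l * Dv n g M s l) - (if i = n+1 then \<i> * Bcx n g (of_real s) else 0)"

lemma D_deriv: "((\<lambda>s. Dv n g M s i) has_vector_derivative D' s i) (at s)"
proof -
  have "((\<lambda>s. Fv n g M s i - Gv n g s i) has_vector_derivative
     (-\<i> * (\<Sum>l\<le>M. Ht n g M i l * Fv n g M s l)) - (-\<i> * (\<Sum>l\<le>M. Ht n g M i l * Gv n g s l) + (if i = n+1 then \<i> * Bcx n g (of_real s) else 0))) (at s)"
    by (rule has_vector_derivative_diff[OF F_deriv[OF n M] G_deriv[OF n M]])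
  moreover have "(-\<i> * (\<Sum>l\<le>M. Ht n g M i l * Fv n g M s l)) - (-\<i> * (\<Sum>l\<le>M. Ht n g M i l * Gv n g s l) + (if i = n+1 then \<i> * Bcx n g (of_real s) else 0)) = D' s i"
    unfolding D'_def Dv_def by (simp add: sum_subtractf right_diff_distrib)
  ultimately show ?thesis unfolding Dv_def by simp
qed

lemma Nr_eq: "Nr n g M s = Re (\<Sum>i\<le>M. Dv n g M s i * cnj (Dv n g M s i))"
  unfolding Nr_def by (simp add: complex_norm_square[symmetric] del: of_real_power)

lemma N_deriv: "(Nr n g M has_real_derivative Re (\<Sum>i\<le>M. Dv n g M s i * cnj (D' s i) + D' s i * cnj (Dv n g M s i))) (at s)"
proof -
  have "((\<lambda>s. \<Sum>i\<le>M. Dv n g M s i * cnj (Dv n g M s i)) has_vector_derivative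
      (\<Sum>i\<le>M. Dv n g M s i * cnj (D' s i) + D' s i * cnj (Dv n g M s i))) (at s)"
    by (intro has_vector_derivative_sum has_vector_derivative_mult has_vector_derivative_cnj D_deriv)
  then have "((\<lambda>s. Re (\<Sum>i\<le>M. Dv n g M s i * cnj (Dv n g M s i))) has_real_derivative
      Re (\<Sum>i\<le>M. Dv n g M s i * cnj (D' s i) + D' s i * cnj (Dv n g M s i))) (at s)"
    by (rule has_field_derivative_Re)
  moreover have "Nr n g M = (\<lambda>s. Re (\<Sum>i\<le>M. Dv n g M s i * cnj (Dv n g M s i)))"
    by (rule ext) (rule Nr_eq)
  ultimately show ?thesis by simp
qed

lemma Ht_sym: "Ht n g M i l = Ht n g M l i"
  unfolding Ht_def using Hmat_sym by auto
lemma Ht_cnj: "cnj (Ht n g M i l) = Ht n g M i l"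
  unfolding Ht_def using Hmat_cnj by auto

lemma N_deriv_le: "Re (\<Sum>i\<le>M. Dv n g M s i * cnj (D' s i) + D' s i * cnj (Dv n g M s i)) \<le> Nr n g M s + 3"
proof -
  let ?V = "Dv n g M s (n+1)" and ?r = "\<i> * Bcx n g (of_real s)"
  have "Re (\<Sum>i\<le>M. Dv n g M s i * cnj (D' s i) + D' s i * cnj (Dv n g M s i)) = -2 * Re (cnj ?V * ?r)"
    by (rule energy_alg[OF Ht_sym Ht_cnj _ M]) (simp add: D'_def)
  also have "\<dots> \<le> 2 * (cmod ?V * cmod ?r)"
  proof -
    have "- Re (cnj ?V * ?r) \<le> cmod (cnj ?V * ?r)" using abs_Re_le_cmod[of "cnj ?V * ?r"] by linarith
    then show ?thesis by (simp add: norm_mult)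
  qed
  also have "\<dots> \<le> (cmod ?V)^2 + (cmod ?r)^2"
    using sum_squares_bound[of "cmod ?V" "cmod ?r"] by (simp add: power2_eq_square algebra_simps)
  also have "\<dots> \<le> Nr n g M s + 3"
  proof -
    have "(cmod ?V)^2 \<le> Nr n g M s"
      unfolding Nr_def by (rule member_le_sum[of "n+1" _ "\<lambda>i. (cmod (Dv n g M s i))^2"]) (use M in auto)
    moreover have "(cmod ?r)^2 \<le> 3" using B_bound[OF n] by (simp add: norm_mult)
    ultimately show ?thesis by linarith
  qed
  finally show ?thesis .
qed

lemma Nr_0: "Nr n g M 0 = 0"
proof -
  have "Dv n g M 0 i = 0" for i
    unfolding Dv_def Fv_def Gv_def E_zero using Acx_0[OF n] Bcx_0[OF n] n by (simp add: uvec_def)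
  then show ?thesis unfolding Nr_def by simp
qed

lemma Nr_bound: assumes t: "t \<ge> 0" shows "Nr n g M t \<le> 3 * exp t - 3"
proof -
  define Q where "Q s = (Nr n g M s + 3) * exp (- s)" for s
  have "Q t \<le> Q 0"
  proof (rule DERIV_nonpos_imp_nonincreasing[OF t])
    fix x assume "0 \<le> x" "x \<le> t"
    let ?N' = "Re (\<Sum>i\<le>M. Dv n g M x i * cnj (D' x i) + D' x i * cnj (Dv n g M x i))"
    have "(Q has_real_derivative (?N' * exp (- x) + (Nr n g M x + 3) * (- exp (- x)))) (at x)"
      unfolding Q_def by (auto intro!: derivative_eq_intros N_deriv)
    moreover have "?N' * exp (- x) + (Nr n g M x + 3) * (- exp (- x)) \<le> 0"
    proof -
      have "?N' * exp (- x) \<le> (Nr n g M x + 3) * exp (- x)"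
        by (rule mult_right_mono[OF N_deriv_le]) simp
      then show ?thesis by simp
    qed
    ultimately show "\<exists>y. (Q has_real_derivative y) (at x) \<and> y \<le> 0" by blast
  qed
  then have "(Nr n g M t + 3) * exp (- t) \<le> 3" unfolding Q_def by (simp add: Nr_0)
  then have "(Nr n g M t + 3) * exp (- t) * exp t \<le> 3 * exp t" by (simp add: mult_right_mono)
  moreover have "(Nr n g M t + 3) * exp (- t) * exp t = Nr n g M t + 3"
    by (simp add: mult.assoc flip: exp_add)
  ultimately show ?thesis by simp
qed

end


lemma A_lower: "n \<ge> 2 \<Longrightarrow> cmod (Acx n g (of_real t)) \<ge> \<bar>pp n g * sin (om n g * t)\<bar>"
proof -
  have "cmod (Acx n g (of_real t))^2 = (cos (om n g * t))^2 + (pp n g * sin (om n g * t))^2"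
    unfolding Acx_real by (rule rot_norm2)
  then have "\<bar>pp n g * sin (om n g * t)\<bar>^2 \<le> cmod (Acx n g (of_real t))^2" by simp
  then show ?thesis by (rule power2_le_imp_le) simp
qed

lemma main_bound:
  assumes n: "n \<ge> 2" and t: "t \<ge> 0"
  shows "cmod (E (\<lambda>k. X n g k 1) t) \<ge> cmod (Acx n g (of_real t)) - sqrt (3 * exp t - 3)"
proof -
  have key: "cmod (Acx n g (of_real t)) - sqrt (3 * exp t - 3) \<le> cmod (E (\<lambda>k. X n g k 1) t) + e" if e: "e > 0" for e
  proof -
    obtain M where M: "M \<ge> n + 1" and ap: "cmod (E (\<lambda>k. X n g k 1) t - E (\<lambda>k. Y n g M k 1) t) \<le> e"
      using trunc_approx[OF n e] by blast
    have F: "E (\<lambda>k. Y n g M k 1) t = Acx n g (of_real t) + Dv n g M t 1"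
      unfolding Dv_def Fv_def Gv_def by simp
    have "(cmod (Dv n g M t 1))^2 \<le> Nr n g M t"
      unfolding Nr_def by (rule member_le_sum[of 1 _ "\<lambda>i. (cmod (Dv n g M t i))^2"]) (use M in auto)
    also have "\<dots> \<le> 3 * exp t - 3" by (rule Nr_bound[OF n _ t]) (use M in simp)
    finally have D: "cmod (Dv n g M t 1) \<le> sqrt (3 * exp t - 3)" by (rule real_le_rsqrt)
    have "cmod (Acx n g (of_real t)) \<le> cmod (E (\<lambda>k. Y n g M k 1) t) + cmod (Dv n g M t 1)"
    proof -
      have "Acx n g (of_real t) = E (\<lambda>k. Y n g M k 1) t - Dv n g M t 1" using F by simp
      then show ?thesis using norm_triangle_ineq4[of "E (\<lambda>k. Y n g M k 1) t" "Dv n g M t 1"] by simp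
    qed
    moreover have "cmod (E (\<lambda>k. Y n g M k 1) t) \<le> cmod (E (\<lambda>k. X n g k 1) t) + e"
    proof -
      have "cmod (E (\<lambda>k. Y n g M k 1) t) \<le> cmod (E (\<lambda>k. X n g k 1) t) + cmod (E (\<lambda>k. Y n g M k 1) t - E (\<lambda>k. X n g k 1) t)"
        by (rule norm_triangle_sub)
      moreover have "cmod (E (\<lambda>k. Y n g M k 1) t - E (\<lambda>k. X n g k 1) t) = cmod (E (\<lambda>k. X n g k 1) t - E (\<lambda>k. Y n g M k 1) t)"
        by (rule norm_minus_commute)
      ultimately show ?thesis using ap by linarith
    qed
    ultimately show ?thesis using D by linarith
  qed
  show ?thesis by (rule field_le_epsilon[OF key])
qed

lemma sin_half: "pi/6 \<le> x \<Longrightarrow> x \<le> 5*pi/6 \<Longrightarrow> sin x \<ge> 1/2"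
proof -
  assume a: "pi/6 \<le> x" "x \<le> 5*pi/6"
  have "sin x = cos (pi/2 - x)" by (simp add: sin_cos_eq)
  also have "\<dots> = cos \<bar>pi/2 - x\<bar>" by simp
  also have "\<dots> \<ge> cos (pi/3)"
  proof (rule cos_monotone_0_pi_le)
    have "pi/2 - x \<le> pi/3" "x - pi/2 \<le> pi/3" using a by linarith+
    then show "\<bar>pi/2 - x\<bar> \<le> pi/3" by linarith
  qed auto
  finally show ?thesis by (simp add: cos_60)
qed


lemma final_n:
  assumes n1: "real n \<ge> 10000" and n2: "real n \<ge> (B0+2)^2" and B0: "B0 \<ge> 0" and gb: "\<bar>g - real n\<bar> \<le> B0"
  shows "cmod (amplitude n g (pi / (2 * sqrt (real n)))) \<ge> 1/10"
proof -
  have n: "n \<ge> 2" using n1 by simp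
  define sn where "sn = sqrt (real n)"
  define t where "t = pi / (2 * sn)"
  have sn2: "sn^2 = real n" unfolding sn_def by simp
  have sn100: "sn \<ge> 100" unfolding sn_def using n1 real_sqrt_le_mono[OF n1] by simp
  have snp: "sn > 0" using sn100 by simp
  have t0: "t \<ge> 0" unfolding t_def using snp by simp
  have t2: "t \<le> 2"
  proof -
    have "pi / (2 * sn) \<le> 4 / (2 * 1)"
      by (rule frac_le) (use snp sn100 pi_less_4 in auto)
    then show ?thesis unfolding t_def by simp
  qed
  let ?d = "dl n g" and ?w = "om n g" and ?p = "pp n g"
  have dabs: "\<bar>?d\<bar> \<le> (B0+2)/2" unfolding dl_def using gb by (simp add: abs_le_iff)
  have d2: "?d^2 \<le> real n / 4"
  proof -
    have "?d^2 \<le> ((B0+2)/2)^2"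
      using dabs by (metis abs_le_square_iff abs_of_nonneg B0 add_nonneg_nonneg zero_le_numeral divide_nonneg_pos zero_less_numeral power2_abs)
    also have "\<dots> = (B0+2)^2/4" by (simp add: power_divide)
    finally show ?thesis using n2 by linarith
  qed
  have w2: "?w^2 = ?d^2 + real n - 1" by (rule om_sq[OF n])
  have wp: "?w > 0" by (rule om_pos[OF n])
  have wlo: "?w \<ge> sn / 3"
  proof (rule power2_le_imp_le)
    have "(sn/3)^2 = real n / 9" using sn2 by (simp add: power_divide)
    also have "\<dots> \<le> ?w^2" unfolding w2 using n1 zero_le_power2[of ?d] by linarith
    finally show "(sn/3)^2 \<le> ?w^2" .
  qed (use wp in simp)
  have whi: "?w \<le> 5 * sn / 3"
  proof (rule power2_le_imp_le)
    have "(5* sn/3)^2 = 25 * real n / 9" using sn2 by (simp add: power_divide power_mult_distrib)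
    moreover have "?w^2 \<le> 25 * real n / 9" unfolding w2 using d2 n1 by linarith
    ultimately show "?w^2 \<le> (5* sn/3)^2" by simp
  qed (use snp in simp)
  have wt: "?w * t = pi / 2 * (?w / sn)" unfolding t_def by (simp add: field_simps)
  have r1: "?w / sn \<ge> 1/3" using wlo snp by (simp add: le_divide_eq)
  have r2: "?w / sn \<le> 5/3" using whi snp by (simp add: divide_le_eq)
  have sinh: "sin (?w * t) \<ge> 1/2"
  proof (rule sin_half)
    show "pi/6 \<le> ?w * t" unfolding wt using mult_left_mono[OF r1, of "pi/2"] by simp
    show "?w * t \<le> 5*pi/6" unfolding wt using mult_left_mono[OF r2, of "pi/2"] by simp
  qed
  have pnum: "?d + real n - 1 \<ge> real n / 2"
  proof -
    have "(B0+2)/2 + 1 \<le> real n / 2"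
    proof -
      have "B0 + 4 \<le> (B0+2)^2" using B0 by (simp add: power2_eq_square algebra_simps)
      then have "B0 + 4 \<le> real n" using n2 by (rule order_trans)
      then show ?thesis by (simp add: field_simps)
    qed
    then show ?thesis using dabs by linarith
  qed
  have plo: "?p \<ge> 3 * sn / 10"
  proof -
    have "3 * sn / 10 = (real n / 2) / (5 * sn / 3)" using sn2 snp by (simp add: field_simps power2_eq_square)
    also have "\<dots> \<le> (?d + real n - 1) / ?w"
      by (rule frac_le) (use pnum whi wp n1 in auto)
    finally show ?thesis unfolding pp_def .
  qed
  have Alo: "cmod (Acx n g (of_real t)) \<ge> 3 * sn / 20"
  proof -
    have "3 * sn / 20 = (3 * sn / 10) * (1/2)" by simp
    also have "\<dots> \<le> ?p * sin (?w * t)"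
      by (rule mult_mono[OF plo sinh]) (use snp plo in auto)
    also have "\<dots> \<le> \<bar>?p * sin (?w * t)\<bar>" by simp
    also have "\<dots> \<le> cmod (Acx n g (of_real t))" by (rule A_lower[OF n])
    finally show ?thesis .
  qed
  have sq: "sqrt (3 * exp t - 3) \<le> 5"
  proof -
    have "exp t \<le> exp 2" using t2 by simp
    also have "exp (2::real) = exp 1 * exp 1" by (simp flip: exp_add)
    also have "\<dots> \<le> 3 * 3" by (rule mult_mono) (use exp_le in auto)
    finally have "3 * exp t - 3 \<le> 5^2" by simp
    then show ?thesis by (rule real_sqrt_le_iff[THEN iffD2, THEN order_trans]) simp
  qed
  have EX: "cmod (E (\<lambda>k. X n g k 1) t) \<ge> sn / 10"
    using main_bound[OF n t0, of g] Alo sq sn100 by linarith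
  have "amplitude n g (pi / (2 * sqrt (real n))) = complex_of_real (1 / sn) * E (\<lambda>k. X n g k 1) t"
    unfolding t_def sn_def by (rule amp_eq[OF n])
  then have "cmod (amplitude n g (pi / (2 * sqrt (real n)))) = cmod (E (\<lambda>k. X n g k 1) t) / sn"
    using snp by (simp add: norm_divide)
  also have "\<dots> \<ge> (sn / 10) / sn"
    by (rule divide_right_mono[OF EX]) (use snp in simp)
  finally show ?thesis using snp by simp
qed


theorem theorem1:
  fixes \<gamma> :: "nat \<Rightarrow> real"
  assumes "\<exists>B. \<forall>n\<ge>2. \<bar>\<gamma> n - real n\<bar> \<le> B"
  shows "\<exists>c>0. \<exists>N\<ge>2. \<forall>n\<ge>N.
           c \<le> cmod (amplitude n (\<gamma> n) (pi / (2 * sqrt (real n))))"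
proof -
  obtain B where B: "\<And>n. n \<ge> 2 \<Longrightarrow> \<bar>\<gamma> n - real n\<bar> \<le> B" using assms by blast
  define B0 where "B0 = max B 0"
  define N where "N = 10000 + nat \<lceil>(B0+2)^2\<rceil>"
  have "\<forall>n\<ge>N. 1/10 \<le> cmod (amplitude n (\<gamma> n) (pi / (2 * sqrt (real n))))"
  proof (intro allI impI)
    fix n assume nN: "N \<le> n"
    have n1: "real n \<ge> 10000" using nN unfolding N_def by linarith
    have "(B0+2)^2 \<le> real (nat \<lceil>(B0+2)^2\<rceil>)" by (rule real_nat_ceiling_ge)
    also have "\<dots> \<le> real n" using nN unfolding N_def by simp
    finally have n2: "real n \<ge> (B0+2)^2" .
    have B0: "B0 \<ge> 0" unfolding B0_def by simp
    have "n \<ge> 2" using n1 by simp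
    then have gb: "\<bar>\<gamma> n - real n\<bar> \<le> B0" using B[of n] unfolding B0_def by simp
    show "1/10 \<le> cmod (amplitude n (\<gamma> n) (pi / (2 * sqrt (real n))))"
      by (rule final_n[OF n1 n2 B0 gb])
  qed
  moreover have "N \<ge> 2" unfolding N_def by simp
  ultimately show ?thesis by (intro exI[of _ "1/10"] conjI) auto
qed


end
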